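(* There exists a topologically mixing shift space $X$ over the alphabet $\{0,1\}$ with exactly two ergodic $\sigma$-invariant measures $\mu_1,\mu_2$ such that every point $x\in X$ is generic for $\mu_1$ or for $\mu_2$. In particular, for every $\lambda\in(0,1)$ the invariant measure $\lambda\mu_1+(1-\lambda)\mu_2$ has no generic point.
   Context: A shift space is a closed $\sigma$-invariant subset of $\{0,1\}^{\mathbb N}$ (product topology), $\sigma$ the left shift. It is topologically mixing if for every two nonempty open sets $U,V$ there is $N$ such that $U\cap\sigma^{-n}V\ne\emptyset$ for all $n\ge N$. $x$ is generic for an invariant measure $\mu$ if $\frac1n\sum_{j<n}\delta_{\sigma^jx}\to\mu$ in the weak$*$ topology. *)

theory Defs
  imports "HOL-Analysis.Analysis" "HOL-Probability.Probability"
begin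

text \<open>Points of the full shift over the alphabet \<open>{0,1}\<close>, encoded as \<open>bool\<close>;
  \<open>nat \<Rightarrow> bool\<close> carries the product topology (bool is discrete).\<close>

definition shift :: "(nat \<Rightarrow> bool) \<Rightarrow> (nat \<Rightarrow> bool)" where
  "shift x = (\<lambda>n. x (Suc n))"

definition shift_space :: "(nat \<Rightarrow> bool) set \<Rightarrow> bool" where
  "shift_space X \<longleftrightarrow> closed X \<and> shift ` X \<subseteq> X"

definition topologically_mixing :: "(nat \<Rightarrow> bool) set \<Rightarrow> bool" where
  "topologically_mixing X \<longleftrightarrow>
     (\<forall>U V. openin (top_of_set X) U \<and> U \<noteq> {} \<and> openin (top_of_set X) V \<and> V \<noteq> {} \<longrightarrow>
        (\<exists>N. \<forall>n\<ge>N. U \<inter> (shift ^^ n) -` V \<noteq> {}))"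

text \<open>Shift-invariant Borel probability measures of the system \<open>(X, shift)\<close>:
  Borel probability measures on the full shift, concentrated on \<open>X\<close>.\<close>
definition invariant_measure :: "(nat \<Rightarrow> bool) set \<Rightarrow> (nat \<Rightarrow> bool) measure \<Rightarrow> bool" where
  "invariant_measure X M \<longleftrightarrow>
     sets M = sets borel \<and> prob_space M \<and> emeasure M X = 1 \<and>
     (\<forall>A\<in>sets borel. emeasure M (shift -` A) = emeasure M A)"

definition ergodic_measure :: "(nat \<Rightarrow> bool) set \<Rightarrow> (nat \<Rightarrow> bool) measure \<Rightarrow> bool" where
  "ergodic_measure X M \<longleftrightarrow> invariant_measure X M \<and>
     (\<forall>A\<in>sets borel. shift -` A = A \<longrightarrow> emeasure M A = 0 \<or> emeasure M A = 1)"

definition birkhoff_avg :: "((nat \<Rightarrow> bool) \<Rightarrow> real) \<Rightarrow> (nat \<Rightarrow> bool) \<Rightarrow> nat \<Rightarrow> real" where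
  "birkhoff_avg f x n = (\<Sum>j<n. f ((shift ^^ j) x)) / real n"

text \<open>\<open>x\<close> is generic for \<open>M\<close>: the empirical measures converge weak-* to \<open>M\<close>,
  i.e. the averages of every continuous test function converge to its integral.\<close>
definition generic_point :: "(nat \<Rightarrow> bool) measure \<Rightarrow> (nat \<Rightarrow> bool) \<Rightarrow> bool" where
  "generic_point M x \<longleftrightarrow>
     (\<forall>f :: (nat \<Rightarrow> bool) \<Rightarrow> real. continuous_on UNIV f \<longrightarrow>
        birkhoff_avg f x \<longlonglongrightarrow> integral\<^sup>L M f)"

end

theory Submission
  imports Defs
begin

definition chain :: "(nat \<Rightarrow> bool) \<Rightarrow> nat \<Rightarrow> nat \<Rightarrow> nat \<Rightarrow> bool" where
  "chain x D q r \<longleftrightarrow> (\<forall>s. q \<le> s \<longrightarrow> s < r \<longrightarrow> (\<exists>t. s < t \<and> t \<le> s + D \<and> x t))"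

definition good :: "(nat \<Rightarrow> bool) \<Rightarrow> nat \<Rightarrow> nat \<Rightarrow> nat \<Rightarrow> bool" where
  "good x p q r \<longleftrightarrow> (p < q \<longrightarrow> x p \<longrightarrow> x q \<longrightarrow> (\<forall>m. p < m \<longrightarrow> m < q \<longrightarrow> \<not> x m) \<longrightarrow>
     2 \<le> q - p \<longrightarrow> q \<le> r \<longrightarrow> x r \<longrightarrow> chain x (q - p) q r \<longrightarrow> (r - q) * (r - q) \<le> q - p)"

definition XX :: "(nat \<Rightarrow> bool) set" where
  "XX = {x. \<forall>p q r. good x p q r}"

lemma goodD: "good x p q r \<Longrightarrow> p < q \<Longrightarrow> x p \<Longrightarrow> x q \<Longrightarrow> (\<forall>m. p < m \<longrightarrow> m < q \<longrightarrow> \<not> x m) \<Longrightarrow>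
     2 \<le> q - p \<Longrightarrow> q \<le> r \<Longrightarrow> x r \<Longrightarrow> chain x (q - p) q r \<Longrightarrow> (r - q) * (r - q) \<le> q - p"
  unfolding good_def by blast

lemma shift_pow: "(shift ^^ n) x = (\<lambda>i. x (i + n))"
  by (induction n arbitrary: x) (auto simp: shift_def)

lemma shift_XX: "x \<in> XX \<Longrightarrow> shift x \<in> XX"
proof -
  assume x: "x \<in> XX"
  show "shift x \<in> XX" unfolding XX_def good_def
  proof (intro CollectI allI impI)
    fix p q r
    assume h: "p < q" "shift x p" "shift x q" "\<forall>m. p < m \<longrightarrow> m < q \<longrightarrow> \<not> shift x m"
      "2 \<le> q - p" "q \<le> r" "shift x r" "chain (shift x) (q - p) q r"
    have g: "good x (Suc p) (Suc q) (Suc r)" using x by (auto simp: XX_def)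
    have nb: "\<forall>m. Suc p < m \<longrightarrow> m < Suc q \<longrightarrow> \<not> x m"
    proof (intro allI impI)
      fix m assume "Suc p < m" "m < Suc q"
      then show "\<not> x m" using h(4)[rule_format, of "m - 1"] by (cases m) (auto simp: shift_def)
    qed
    have ch: "chain x (Suc q - Suc p) (Suc q) (Suc r)" unfolding chain_def
    proof (intro allI impI)
      fix s assume s: "Suc q \<le> s" "s < Suc r"
      have "q \<le> s - 1" "s - 1 < r" using s by auto
      then obtain t where "s - 1 < t" "t \<le> s - 1 + (q - p)" "shift x t"
        using h(8) unfolding chain_def by blast
      then show "\<exists>t. s < t \<and> t \<le> s + (Suc q - Suc p) \<and> x t" using s
        by (intro exI[of _ "Suc t"]) (auto simp: shift_def)
    qed
    have "(Suc r - Suc q) * (Suc r - Suc q) \<le> Suc q - Suc p"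
      by (rule goodD[OF g]) (use h nb ch in \<open>simp_all add: shift_def\<close>)
    then show "(r - q) * (r - q) \<le> q - p" by simp
  qed
qed

lemma zero_XX: "(\<lambda>_. False) \<in> XX" by (auto simp: XX_def good_def)
lemma one_XX: "(\<lambda>_. True) \<in> XX"
  unfolding XX_def good_def
proof (clarify)
  fix p q r :: nat
  assume a: "p < q" "\<forall>m>p. m < q \<longrightarrow> \<not> True" "2 \<le> q - p"
  then have "Suc p < q" by arith
  then show "(r - q) * (r - q) \<le> q - p" using a(2) \<open>Suc p < q\<close> by blast
qed


lemma open_bool_single: "open {b::bool}"
proof (cases b)
  case True
  have "{b} = {False<..}" using True by auto
  then show ?thesis by simp
next
  case False
  have "{b} = {..<True}" using False by auto
  then show ?thesis by simp
qed

lemma cyl_open: "open {y::nat\<Rightarrow>bool. \<forall>i<k. y i = x i}"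
proof -
  have "open {f::nat\<Rightarrow>bool. \<forall>i\<in>{..<k}. f (id i) \<in> {x i}}"
    by (rule product_topology_basis') (auto simp: open_bool_single)
  moreover have "{f::nat\<Rightarrow>bool. \<forall>i\<in>{..<k}. f (id i) \<in> {x i}} = {y. \<forall>i<k. y i = x i}" by auto
  ultimately show ?thesis by simp
qed

lemma open_contains_cyl:
  fixes O' :: "(nat \<Rightarrow> bool) set"
  assumes "open O'" "x \<in> O'"
  shows "\<exists>k. \<forall>y. (\<forall>i<k. y i = x i) \<longrightarrow> y \<in> O'"
proof -
  have "openin (product_topology (\<lambda>i. euclidean) UNIV) O'" using assms(1) by (simp add: open_fun_def)
  from product_topology_open_contains_basis[OF this assms(2)] obtain X' where
    X': "x \<in> (\<Pi>\<^sub>E i\<in>UNIV. X' i)" "finite {i. X' i \<noteq> topspace euclidean}" "(\<Pi>\<^sub>E i\<in>UNIV. X' i) \<subseteq> O'"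
    by blast
  have "finite {i. X' i \<noteq> UNIV}" using X'(2) by simp
  then obtain k where k: "{i. X' i \<noteq> UNIV} \<subseteq> {..<k}" using finite_nat_iff_bounded by blast
  show ?thesis
  proof (intro exI allI impI)
    fix y :: "nat \<Rightarrow> bool" assume y: "\<forall>i<k. y i = x i"
    have "y \<in> (\<Pi>\<^sub>E i\<in>UNIV. X' i)"
    proof -
      have "y i \<in> X' i" for i
      proof (cases "i < k")
        case True then show ?thesis using y X'(1) by (auto simp: PiE_UNIV_domain)
      next
        case False then show ?thesis using k by auto
      qed
      then show ?thesis by (auto simp: PiE_UNIV_domain)
    qed
    then show "y \<in> O'" using X'(3) by auto
  qed
qed

lemma open_finite_dep:
  fixes S :: "(nat \<Rightarrow> bool) set"
  assumes "\<And>x y. (\<forall>i<B. x i = y i) \<Longrightarrow> x \<in> S \<Longrightarrow> y \<in> S"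
  shows "open S"
proof (rule topological_space_class.openI)
  fix x assume "x \<in> S"
  show "\<exists>T. open T \<and> x \<in> T \<and> T \<subseteq> S"
  proof (rule exI[of _ "{y. \<forall>i<B. y i = x i}"], intro conjI)
    show "open {y. \<forall>i<B. y i = x i}" by (rule cyl_open)
    show "x \<in> {y. \<forall>i<B. y i = x i}" by simp
    show "{y. \<forall>i<B. y i = x i} \<subseteq> S"
    proof
      fix y assume "y \<in> {y. \<forall>i<B. y i = x i}"
      then have "\<forall>i<B. x i = y i" by simp
      then show "y \<in> S" using assms[of x y] \<open>x \<in> S\<close> by blast
    qed
  qed
qed

lemma clopen_finite_dep:
  fixes S :: "(nat \<Rightarrow> bool) set"
  assumes "\<And>x y. (\<forall>i<B. x i = y i) \<Longrightarrow> x \<in> S \<Longrightarrow> y \<in> S"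
  shows "closed S"
proof -
  have "open (- S)"
  proof (rule open_finite_dep[of B])
    fix x y :: "nat \<Rightarrow> bool" assume a: "\<forall>i<B. x i = y i" "x \<in> - S"
    have "\<forall>i<B. y i = x i" using a(1) by simp
    then show "y \<in> - S" using assms[of y x] a(2) by blast
  qed
  then show ?thesis by (simp add: closed_def)
qed

lemma good_dep:
  assumes "\<forall>i<r + q + 1. x i = y i" "good x p q r"
  shows "good y p q r"
proof -
  have e: "\<And>i. i < r + q + 1 \<Longrightarrow> x i = y i" using assms(1) by auto
  show ?thesis unfolding good_def
  proof (intro impI)
    assume h: "p < q" "y p" "y q" "\<forall>m. p < m \<longrightarrow> m < q \<longrightarrow> \<not> y m" "2 \<le> q - p" "q \<le> r" "y r"
      "chain y (q - p) q r"
    have ch: "chain x (q - p) q r" unfolding chain_def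
    proof (intro allI impI)
      fix s assume s: "q \<le> s" "s < r"
      then obtain t where t: "s < t" "t \<le> s + (q - p)" "y t" using h(8) unfolding chain_def by blast
      have "t < r + q + 1" using t s h(1) by linarith
      then show "\<exists>t. s < t \<and> t \<le> s + (q - p) \<and> x t" using t e by blast
    qed
    show "(r - q) * (r - q) \<le> q - p"
    proof (rule goodD[OF assms(2) h(1) _ _ _ h(5) h(6) _ ch])
      show "x p" "x q" "x r" using h e by auto
      show "\<forall>m. p < m \<longrightarrow> m < q \<longrightarrow> \<not> x m" using h(4) e h(6) by auto
    qed
  qed
qed

lemma closed_XX: "closed XX"
proof -
  have "XX = (\<Inter>p. \<Inter>q. \<Inter>r. {x. good x p q r})" unfolding XX_def by auto
  moreover have c: "closed {x. good x p q r}" for p q r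
  proof (rule clopen_finite_dep[of "r + q + 1"])
    fix x y :: "nat \<Rightarrow> bool" assume "\<forall>i<r + q + 1. x i = y i" "x \<in> {x. good x p q r}"
    then show "y \<in> {x. good x p q r}" using good_dep[of r q x y p] by simp
  qed
  moreover have "closed (\<Inter>p. \<Inter>q. \<Inter>r. {x. good x p q r})"
    by (intro closed_INT ballI c)
  ultimately show ?thesis by simp
qed

lemma shift_space_XX: "shift_space XX"
  unfolding shift_space_def using closed_XX shift_XX by auto

lemma mix_point:
  fixes x y :: "nat \<Rightarrow> bool"
  assumes x: "x \<in> XX" and y: "y \<in> XX" and n: "k * k + 2 * k \<le> n"
  defines "z \<equiv> (\<lambda>i. if i < k then x i else if n \<le> i \<and> i < n + k then y (i - n) else False)"
  shows "z \<in> XX"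
  unfolding XX_def
proof (intro CollectI allI)
  fix p q r
  show "good z p q r" unfolding good_def
  proof (intro impI)
    assume h: "p < q" "z p" "z q" "\<forall>m. p < m \<longrightarrow> m < q \<longrightarrow> \<not> z m" "2 \<le> q - p" "q \<le> r" "z r"
      "chain z (q - p) q r"
    have zr: "\<And>i. z i \<Longrightarrow> i < k \<or> (n \<le> i \<and> i < n + k)" unfolding z_def by (auto split: if_splits)
    have kn: "2 * k \<le> n" using n by simp
    show "(r - q) * (r - q) \<le> q - p"
    proof (cases "q < k")
      case qk: True
      then have pk: "p < k" using h(1) by simp
      show ?thesis
      proof (cases "r < k")
        case rk: True
        have ch: "chain x (q - p) q r" unfolding chain_def
        proof (intro allI impI)
          fix s assume s: "q \<le> s" "s < r"
          then obtain t where t: "s < t" "t \<le> s + (q - p)" "z t" using h(8) unfolding chain_def by blast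
          have "t < n" using t s rk qk kn by linarith
          then have "t < k" using zr[OF t(3)] by auto
          then show "\<exists>t. s < t \<and> t \<le> s + (q - p) \<and> x t" using t z_def by auto
        qed
        show ?thesis
        proof (rule goodD[of x p q r])
          show "good x p q r" using x by (auto simp: XX_def)
          show "x p" "x q" "x r" using h pk qk rk by (auto simp: z_def)
          show "\<forall>m. p < m \<longrightarrow> m < q \<longrightarrow> \<not> x m" using h(4) qk by (auto simp: z_def)
        qed (use h ch in auto)
      next
        case rk: False
        have "k - 1 < r" "q \<le> k - 1" using rk qk by auto
        then obtain t where t: "k - 1 < t" "t \<le> k - 1 + (q - p)" "z t" using h(8) unfolding chain_def by blast
        have "t < n" using t qk kn by linarith
        then have False using zr[OF t(3)] t(1) by auto
        then show ?thesis by simp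
      qed
    next
      case qk: False
      then have qn: "n \<le> q" "q < n + k" using zr[OF h(3)] by auto
      have rn: "r < n + k" using zr[OF h(7)] h(6) qn by auto
      show ?thesis
      proof (cases "p < k")
        case pk: True
        have "r - q \<le> k" using rn qn h(6) by linarith
        then have "(r - q) * (r - q) \<le> k * k" by (intro mult_mono) auto
        also have "k * k \<le> q - p" using n qn pk by linarith
        finally show ?thesis .
      next
        case pk: False
        then have pn: "n \<le> p" using zr[OF h(2)] by auto
        have ch: "chain y (q - p) (q - n) (r - n)" unfolding chain_def
        proof (intro allI impI)
          fix s assume s: "q - n \<le> s" "s < r - n"
          then have "q \<le> s + n" "s + n < r" using qn by auto
          then obtain t where t: "s + n < t" "t \<le> s + n + (q - p)" "z t" using h(8) unfolding chain_def by blast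
          have "t < n + k" using zr[OF t(3)] t(1) by auto
          moreover have "\<not> t < k" "n \<le> t" using t(1) kn by auto
          ultimately have "y (t - n)" using t(3) unfolding z_def by auto
          then show "\<exists>t. s < t \<and> t \<le> s + (q - p) \<and> y t" using t
            by (intro exI[of _ "t - n"]) auto
        qed
        have "(r - n - (q - n)) * (r - n - (q - n)) \<le> q - n - (p - n)"
        proof (rule goodD[of y "p - n" "q - n" "r - n"])
          show "good y (p - n) (q - n) (r - n)" using y by (auto simp: XX_def)
          show "y (p - n)" "y (q - n)" "y (r - n)" using h pn qn rn pk qk by (auto simp: z_def)
          show "\<forall>m. p - n < m \<longrightarrow> m < q - n \<longrightarrow> \<not> y m"
          proof (intro allI impI)
            fix m assume "p - n < m" "m < q - n"
            then have "p < m + n" "m + n < q" using pn qn by auto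
            then have "\<not> z (m + n)" using h(4) by auto
            then show "\<not> y m" using \<open>m + n < q\<close> qn pn pk kn by (auto simp: z_def)
          qed
        qed (use h ch pn qn in auto)
        then show ?thesis using pn qn h(6) by simp
      qed
    qed
  qed
qed

lemma mixing_XX: "topologically_mixing XX"
  unfolding topologically_mixing_def
proof (intro allI impI)
  fix U V assume a: "openin (top_of_set XX) U \<and> U \<noteq> {} \<and> openin (top_of_set XX) V \<and> V \<noteq> {}"
  obtain OU OV where o: "open OU" "U = XX \<inter> OU" "open OV" "V = XX \<inter> OV"
    using a by (meson openin_open)
  obtain x where x: "x \<in> U" using a by auto
  obtain y where y: "y \<in> V" using a by auto
  have "x \<in> OU" "y \<in> OV" using x y o by auto
  obtain k1 where k1: "\<forall>w. (\<forall>i<k1. w i = x i) \<longrightarrow> w \<in> OU" using open_contains_cyl[OF o(1) \<open>x \<in> OU\<close>] by blast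
  obtain k2 where k2: "\<forall>w. (\<forall>i<k2. w i = y i) \<longrightarrow> w \<in> OV" using open_contains_cyl[OF o(3) \<open>y \<in> OV\<close>] by blast
  define k where "k = k1 + k2"
  show "\<exists>N. \<forall>n\<ge>N. U \<inter> (shift ^^ n) -` V \<noteq> {}"
  proof (intro exI allI impI)
    fix n assume n: "k * k + 2 * k \<le> n"
    define z where "z \<equiv> (\<lambda>i. if i < k then x i else if n \<le> i \<and> i < n + k then y (i - n) else False)"
    have zX: "z \<in> XX" unfolding z_def by (rule mix_point) (use x y o n in auto)
    have "\<forall>i<k1. z i = x i" by (simp add: z_def k_def)
    then have "z \<in> OU" using k1 by blast
    moreover have "\<forall>i<k2. (shift ^^ n) z i = y i"
    proof (intro allI impI)
      fix i assume "i < k2"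
      then have "\<not> i + n < k" "n \<le> i + n" "i + n < n + k" using n by (auto simp: k_def)
      then show "(shift ^^ n) z i = y i" by (simp add: shift_pow z_def)
    qed
    then have "(shift ^^ n) z \<in> OV" using k2 by blast
    moreover have "\<And>m. (shift ^^ m) z \<in> XX"
    proof -
      fix m show "(shift ^^ m) z \<in> XX" by (induction m) (simp_all add: zX shift_XX)
    qed
    ultimately show "U \<inter> (shift ^^ n) -` V \<noteq> {}" using zX o by auto
  qed
qed


definition gap :: "(nat \<Rightarrow> bool) \<Rightarrow> nat \<Rightarrow> nat \<Rightarrow> bool" where
  "gap x p q \<longleftrightarrow> p < q \<and> x p \<and> x q \<and> (\<forall>m. p < m \<longrightarrow> m < q \<longrightarrow> \<not> x m)"

lemma cluster:
  assumes x: "x \<in> XX" and g: "gap x p q" and D: "2 \<le> q - p"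
  shows "\<exists>r. q \<le> r \<and> x r \<and> (r - q) * (r - q) \<le> q - p \<and> (\<forall>r'. r < r' \<longrightarrow> r' \<le> r + (q - p) \<longrightarrow> \<not> x r')"
proof -
  define R where "R = {r. q \<le> r \<and> x r \<and> chain x (q - p) q r}"
  have sq: "(r - q) * (r - q) \<le> q - p" if "r \<in> R" for r
  proof (rule goodD[of x p q r])
    show "good x p q r" using x by (auto simp: XX_def)
  qed (use that g D in \<open>auto simp: R_def gap_def\<close>)
  have "R \<subseteq> {..q + (q - p)}"
  proof
    fix r assume r: "r \<in> R"
    have "r - q \<le> (r - q) * (r - q)" by (cases "r - q") auto
    moreover have "q \<le> r" using r by (simp add: R_def)
    ultimately have "r \<le> q + (q - p)" using sq[OF r] by linarith
    then show "r \<in> {..q + (q - p)}" by simp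
  qed
  then have fin: "finite R" by (rule finite_subset) auto
  have qR: "q \<in> R" using g by (auto simp: R_def gap_def chain_def)
  define r where "r = Max R"
  have "R \<noteq> {}" using qR by auto
  then have rR: "r \<in> R" using fin by (simp add: r_def)
  have rmax: "r' \<le> r" if "r' \<in> R" for r' using fin that by (simp add: r_def)
  show ?thesis
  proof (intro exI conjI allI impI)
    show "q \<le> r" "x r" using rR by (auto simp: R_def)
    show "(r - q) * (r - q) \<le> q - p" using sq[OF rR] .
    fix r' assume r': "r < r'" "r' \<le> r + (q - p)"
    show "\<not> x r'"
    proof
      assume xr': "x r'"
      have "chain x (q - p) q r'" unfolding chain_def
      proof (intro allI impI)
        fix s assume s: "q \<le> s" "s < r'"
        show "\<exists>t. s < t \<and> t \<le> s + (q - p) \<and> x t"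
        proof (cases "s < r")
          case True
          then show ?thesis using rR s(1) by (auto simp: R_def chain_def)
        next
          case False
          then show ?thesis using s r' xr' by (intro exI[of _ r']) auto
        qed
      qed
      then have "r' \<in> R" using xr' r' rR by (auto simp: R_def)
      then show False using rmax r' by fastforce
    qed
  qed
qed

lemma arith_aux:
  fixes a M D :: nat
  assumes "a * a \<le> D" "2 * M * M \<le> D"
  shows "M * (a + 1) \<le> D"
proof (cases "a < 2 * M")
  case True
  then have "M * (a + 1) \<le> M * (2 * M)" by (intro mult_le_mono2) auto
  then show ?thesis using assms(2) by (simp add: mult.assoc mult.left_commute)
next
  case False
  then have "M * (a + 1) \<le> 2 * M * a" using False by (simp add: algebra_simps)
  also have "\<dots> \<le> a * a" using False by (intro mult_le_mono1) auto
  finally show ?thesis using assms(1) by simp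
qed

lemma next_one:
  assumes "\<forall>N. \<exists>n\<ge>N. x n" "x r"
  shows "\<exists>q'. gap x r q'"
proof -
  obtain n where n: "n \<ge> Suc r" "x n" using assms(1) by blast
  define q' where "q' = (LEAST i. r < i \<and> x i)"
  have q': "r < q'" "x q'" using LeastI[of "\<lambda>i. r < i \<and> x i" n] n by (auto simp: q'_def)
  have "\<not> x m" if "r < m" "m < q'" for m
    using not_less_Least[of m "\<lambda>i. r < i \<and> x i"] that by (auto simp: q'_def)
  then show ?thesis using q' assms(2) by (auto simp: gap_def)
qed

lemma count_bound:
  assumes x: "x \<in> XX" and M: "1 \<le> M"
  shows "gap x p q \<Longrightarrow> 2 * M * M \<le> q - p \<Longrightarrow> M * card {i. q \<le> i \<and> i < n \<and> x i} \<le> (n - q) + (q - p)"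
proof (induction "n - q" arbitrary: p q rule: less_induct)
  case less
  have D2: "2 \<le> q - p"
  proof -
    have "2 * 1 * 1 \<le> 2 * M * M" using M by (intro mult_le_mono) auto
    then show ?thesis using less.prems(2) by linarith
  qed
  obtain r where r: "q \<le> r" "x r" "(r - q) * (r - q) \<le> q - p" "\<forall>r'. r < r' \<longrightarrow> r' \<le> r + (q - p) \<longrightarrow> \<not> x r'"
    using cluster[OF x less.prems(1) D2] by blast
  have Mc: "M * (r - q + 1) \<le> q - p" using arith_aux[OF r(3) less.prems(2)] .
  have cardA: "card {i. q \<le> i \<and> i < n \<and> x i \<and> i \<le> r} \<le> r - q + 1"
  proof -
    have "card {i. q \<le> i \<and> i < n \<and> x i \<and> i \<le> r} \<le> card {q..r}"
      by (rule card_mono) auto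
    then show ?thesis using r(1) by simp
  qed
  show ?case
  proof (cases "\<exists>i. r < i \<and> i < n \<and> x i")
    case False
    then have "{i. q \<le> i \<and> i < n \<and> x i} = {i. q \<le> i \<and> i < n \<and> x i \<and> i \<le> r}" by (auto simp: not_less)
    then have "card {i. q \<le> i \<and> i < n \<and> x i} \<le> r - q + 1" using cardA by simp
    then have "M * card {i. q \<le> i \<and> i < n \<and> x i} \<le> M * (r - q + 1)" by (rule mult_le_mono2)
    then show ?thesis using Mc by linarith
  next
    case True
    then obtain i0 where i0: "r < i0" "i0 < n" "x i0" by blast
    define q' where "q' = (LEAST i. r < i \<and> x i)"
    have q': "r < q'" "x q'" "q' \<le> i0" using LeastI[of "\<lambda>i. r < i \<and> x i" i0] Least_le[of "\<lambda>i. r < i \<and> x i" i0] i0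
      by (auto simp: q'_def)
    have nb: "\<not> x m" if "r < m" "m < q'" for m
      using not_less_Least[of m "\<lambda>i. r < i \<and> x i"] that by (auto simp: q'_def)
    have g': "gap x r q'" using q' nb r(2) by (auto simp: gap_def)
    have far: "q' > r + (q - p)"
    proof (rule ccontr)
      assume "\<not> q' > r + (q - p)"
      then have "q' \<le> r + (q - p)" by simp
      then show False using r(4) q'(1) q'(2) by blast
    qed
    have D': "2 * M * M \<le> q' - r" using far less.prems(2) by linarith
    have lt: "n - q' < n - q" using q' i0 r(1) by linarith
    have IH: "M * card {i. q' \<le> i \<and> i < n \<and> x i} \<le> (n - q') + (q' - r)"
      using less.hyps[OF lt g' D'] by simp
    have split: "{i. q \<le> i \<and> i < n \<and> x i} \<subseteq> {i. q \<le> i \<and> i < n \<and> x i \<and> i \<le> r} \<union> {i. q' \<le> i \<and> i < n \<and> x i}"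
    proof
      fix i assume "i \<in> {i. q \<le> i \<and> i < n \<and> x i}"
      then have i: "q \<le> i" "i < n" "x i" by auto
      show "i \<in> {i. q \<le> i \<and> i < n \<and> x i \<and> i \<le> r} \<union> {i. q' \<le> i \<and> i < n \<and> x i}"
      proof (cases "i \<le> r")
        case True then show ?thesis using i by simp
      next
        case False
        then have "q' \<le> i" using nb[of i] i(3) by (meson not_less)
        then show ?thesis using i by simp
      qed
    qed
    have "card {i. q \<le> i \<and> i < n \<and> x i} \<le> card ({i. q \<le> i \<and> i < n \<and> x i \<and> i \<le> r} \<union> {i. q' \<le> i \<and> i < n \<and> x i})"
      by (rule card_mono[OF _ split]) auto
    also have "\<dots> \<le> card {i. q \<le> i \<and> i < n \<and> x i \<and> i \<le> r} + card {i. q' \<le> i \<and> i < n \<and> x i}"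
      by (rule card_Un_le)
    finally have c1: "M * card {i. q \<le> i \<and> i < n \<and> x i} \<le> M * (card {i. q \<le> i \<and> i < n \<and> x i \<and> i \<le> r} + card {i. q' \<le> i \<and> i < n \<and> x i})"
      by (rule mult_le_mono2)
    have c2: "M * card {i. q \<le> i \<and> i < n \<and> x i \<and> i \<le> r} \<le> M * (r - q + 1)"
      using cardA by (rule mult_le_mono2)
    have "M * card {i. q \<le> i \<and> i < n \<and> x i} \<le> M * (r - q + 1) + M * card {i. q' \<le> i \<and> i < n \<and> x i}"
      using c1 c2 by (simp add: distrib_left)
    then show ?thesis using Mc IH q' i0 r(1) by linarith
  qed
qed


lemma far_gap:
  assumes x: "x \<in> XX" and g: "gap x p q" and D: "2 \<le> q - p" and inf: "\<forall>N. \<exists>n\<ge>N. x n"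
  shows "\<exists>p' q'. gap x p' q' \<and> q - p < q' - p'"
proof -
  obtain r where r: "q \<le> r" "x r" "\<forall>r'. r < r' \<longrightarrow> r' \<le> r + (q - p) \<longrightarrow> \<not> x r'"
    using cluster[OF x g D] by blast
  obtain q' where g': "gap x r q'" using next_one[OF inf r(2)] by blast
  have far: "q' > r + (q - p)"
  proof (rule ccontr)
    assume "\<not> q' > r + (q - p)"
    then have "q' \<le> r + (q - p)" by simp
    then show False using r(3) g' by (auto simp: gap_def)
  qed
  then show ?thesis using g' by (intro exI[of _ r] exI[of _ q']) auto
qed

lemma first_gap:
  assumes inf: "\<forall>N. \<exists>n\<ge>N. x n" and ne: "\<not> (\<exists>N. \<forall>n\<ge>N. x n)"
  shows "\<exists>p q. gap x p q \<and> 2 \<le> q - p"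
proof -
  obtain o1 where o1: "x o1" using inf by blast
  obtain z where z: "z \<ge> Suc o1" "\<not> x z" using ne by blast
  obtain n where n: "n \<ge> Suc z" "x n" using inf by blast
  define q where "q = (LEAST i. z < i \<and> x i)"
  have q: "z < q" "x q" using LeastI[of "\<lambda>i. z < i \<and> x i" n] n by (auto simp: q_def)
  have nbq: "\<not> x m" if "z < m" "m < q" for m
    using not_less_Least[of m "\<lambda>i. z < i \<and> x i"] that by (auto simp: q_def)
  define S where "S = {i. i < q \<and> x i}"
  have fin: "finite S" by (auto simp: S_def)
  have "o1 \<in> S" using o1 z q by (auto simp: S_def)
  then have ne': "S \<noteq> {}" by auto
  define p where "p = Max S"
  have pS: "p \<in> S" using fin ne' by (simp add: p_def)
  have pmax: "i \<le> p" if "i \<in> S" for i using fin that by (simp add: p_def)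
  have pz: "p < z"
  proof (rule ccontr)
    assume "\<not> p < z"
    then have "z \<le> p" by simp
    moreover have "p \<noteq> z" using pS z(2) by (auto simp: S_def)
    ultimately have "z < p" by simp
    then show False using nbq[of p] pS by (auto simp: S_def)
  qed
  have "gap x p q" unfolding gap_def
  proof (intro conjI allI impI)
    show "p < q" "x p" using pS by (auto simp: S_def)
    show "x q" by (rule q(2))
    fix m assume m: "p < m" "m < q"
    show "\<not> x m"
    proof
      assume "x m"
      then have "m \<in> S" using m by (simp add: S_def)
      then show False using pmax m by fastforce
    qed
  qed
  moreover have "2 \<le> q - p" using pz q(1) by linarith
  ultimately show ?thesis by blast
qed

lemma big_gap:
  assumes x: "x \<in> XX" and inf: "\<forall>N. \<exists>n\<ge>N. x n" and ne: "\<not> (\<exists>N. \<forall>n\<ge>N. x n)"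
  shows "\<exists>p q. gap x p q \<and> 2 \<le> q - p \<and> D0 \<le> q - p"
proof (induction D0)
  case 0
  then show ?case using first_gap[OF inf ne] by auto
next
  case (Suc D0)
  then obtain p q where pq: "gap x p q" "2 \<le> q - p" "D0 \<le> q - p" by blast
  obtain p' q' where "gap x p' q'" "q - p < q' - p'" using far_gap[OF x pq(1) pq(2) inf] by blast
  then show ?case using pq by (intro exI[of _ p'] exI[of _ q']) auto
qed

lemma dens_from_bound:
  fixes c :: "nat \<Rightarrow> nat"
  assumes "\<And>M. 1 \<le> M \<Longrightarrow> \<exists>n0. \<forall>n\<ge>n0. M * c n \<le> 2 * n"
  shows "(\<lambda>n. real (c n) / real n) \<longlonglongrightarrow> 0"
  unfolding LIMSEQ_iff
proof (intro allI impI)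
  fix e :: real assume e: "0 < e"
  define M where "M = nat (ceiling (2 / e)) + 1"
  have M1: "1 \<le> M" by (simp add: M_def)
  have Me: "2 / e < real M" unfolding M_def by linarith
  obtain n0 where n0: "\<forall>n\<ge>n0. M * c n \<le> 2 * n" using assms[OF M1] by blast
  show "\<exists>no. \<forall>n\<ge>no. norm (real (c n) / real n - 0) < e"
  proof (intro exI allI impI)
    fix n assume n: "n \<ge> max n0 1"
    then have "M * c n \<le> 2 * n" using n0 by auto
    then have le: "real M * real (c n) \<le> 2 * real n" by (metis of_nat_le_iff of_nat_mult of_nat_numeral)
    have np: "0 < real n" using n by auto
    have "2 < e * real M" using Me e by (simp add: field_simps)
    then have "2 * real n < e * real M * real n" using np by simp
    have "real (c n) / real n \<le> 2 / real M"
      using le np M1 by (simp add: field_simps)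
    also have "\<dots> < e" using Me e M1 by (simp add: field_simps)
    finally show "norm (real (c n) / real n - 0) < e" by simp
  qed
qed

lemma dens_zero_XX:
  assumes x: "x \<in> XX" and ne: "\<not> (\<exists>N. \<forall>n\<ge>N. x n)"
  shows "(\<lambda>n. real (card {i. i < n \<and> x i}) / real n) \<longlonglongrightarrow> 0"
proof (rule dens_from_bound)
  fix M :: nat assume M: "1 \<le> M"
  show "\<exists>n0. \<forall>n\<ge>n0. M * card {i. i < n \<and> x i} \<le> 2 * n"
  proof (cases "\<forall>N. \<exists>n\<ge>N. x n")
    case False
    then obtain N where N: "\<forall>n\<ge>N. \<not> x n" by (meson not_less)
    have "card {i. i < n \<and> x i} \<le> N" for n
    proof -
      have "{i. i < n \<and> x i} \<subseteq> {..<N}" using N by (auto simp: not_less[symmetric])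
      then have "card {i. i < n \<and> x i} \<le> card {..<N}" by (rule card_mono[rotated]) auto
      then show ?thesis by simp
    qed
    then have mn: "M * card {i. i < n \<and> x i} \<le> M * N" for n by (rule mult_le_mono2)
    show ?thesis
    proof (intro exI allI impI)
      fix n assume "M * N \<le> n"
      then show "M * card {i. i < n \<and> x i} \<le> 2 * n" using mn[of n] by linarith
    qed
  next
    case True
    obtain p q where pq: "gap x p q" "2 \<le> q - p" "2 * M * M \<le> q - p"
      using big_gap[OF x True ne] by blast
    have cb: "M * card {i. q \<le> i \<and> i < n \<and> x i} \<le> (n - q) + (q - p)" for n
      using count_bound[OF x M pq(1) pq(3)] .
    have sp: "card {i. i < n \<and> x i} \<le> q + card {i. q \<le> i \<and> i < n \<and> x i}" for n
    proof -
      have "{i. i < n \<and> x i} \<subseteq> {..<q} \<union> {i. q \<le> i \<and> i < n \<and> x i}" by auto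
      then have "card {i. i < n \<and> x i} \<le> card ({..<q} \<union> {i. q \<le> i \<and> i < n \<and> x i})"
        by (rule card_mono[rotated]) auto
      also have "\<dots> \<le> card {..<q} + card {i. q \<le> i \<and> i < n \<and> x i}" by (rule card_Un_le)
      finally show ?thesis by simp
    qed
    show ?thesis
    proof (intro exI allI impI)
      fix n assume n: "n \<ge> M * q + (q - p)"
      have "M * card {i. i < n \<and> x i} \<le> M * (q + card {i. q \<le> i \<and> i < n \<and> x i})"
        using sp by (rule mult_le_mono2)
      also have "\<dots> = M * q + M * card {i. q \<le> i \<and> i < n \<and> x i}" by (simp add: distrib_left)
      also have "\<dots> \<le> M * q + ((n - q) + (q - p))" using cb by simp
      also have "\<dots> \<le> 2 * n" using n by linarith
      finally show "M * card {i. i < n \<and> x i} \<le> 2 * n" .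
    qed
  qed
qed


lemma borel_finite_dep:
  fixes S :: "(nat \<Rightarrow> bool) set"
  assumes "\<And>x y. (\<forall>i<B. x i = y i) \<Longrightarrow> x \<in> S \<Longrightarrow> y \<in> S"
  shows "S \<in> sets borel"
  using clopen_finite_dep[OF assms] by (rule borel_closed)

lemma closed_coord: "closed {x::nat\<Rightarrow>bool. x n = b}"
  by (rule clopen_finite_dep[of "Suc n"]) auto

lemma borel_coord: "{x::nat\<Rightarrow>bool. x n} \<in> sets borel"
  by (rule borel_finite_dep[of "Suc n"]) auto

lemma closed_single: "closed {z::nat\<Rightarrow>bool}"
proof -
  have "{z} = (\<Inter>n. {x::nat\<Rightarrow>bool. x n = z n})" by auto
  moreover have "closed (\<Inter>n. {x::nat\<Rightarrow>bool. x n = z n})" by (intro closed_INT ballI closed_coord)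
  ultimately show ?thesis by simp
qed

lemma borel_single: "{z::nat\<Rightarrow>bool} \<in> sets borel"
  using closed_single by (rule borel_closed)

lemma shift_cont: "continuous_on UNIV shift"
  unfolding shift_def by (intro continuous_on_coordinatewise_then_product continuous_on_product_coordinates)

lemma shift_meas: "shift \<in> borel_measurable borel"
  using shift_cont by (rule borel_measurable_continuous_onI)

lemma shift_vimage_borel: "A \<in> sets borel \<Longrightarrow> shift -` A \<in> sets borel"
  using measurable_sets[OF shift_meas] by simp

lemma borel_XX: "XX \<in> sets borel"
  using closed_XX by (rule borel_closed)

definition z0 :: "nat \<Rightarrow> bool" where "z0 = (\<lambda>_. False)"
definition z1 :: "nat \<Rightarrow> bool" where "z1 = (\<lambda>_. True)"

lemma ergodic_return:
  assumes "z \<in> XX" "shift z = z"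
  shows "ergodic_measure XX (return borel z)"
  unfolding ergodic_measure_def invariant_measure_def
proof (intro conjI ballI impI)
  show "sets (return borel z) = sets borel" by simp
  show "prob_space (return borel z)" by (rule prob_space_return) simp
  show "emeasure (return borel z) XX = 1" using assms(1) borel_XX by simp
  fix A :: "(nat \<Rightarrow> bool) set" assume A: "A \<in> sets borel"
  show "emeasure (return borel z) (shift -` A) = emeasure (return borel z) A"
    using A shift_vimage_borel[OF A] assms(2) by (simp add: indicator_def)
  assume "shift -` A = A"
  show "emeasure (return borel z) A = 0 \<or> emeasure (return borel z) A = 1"
    using A by (simp add: indicator_def)
qed

lemma erg0: "ergodic_measure XX (return borel z0)"
  using zero_XX by (intro ergodic_return) (auto simp: z0_def shift_def)

lemma erg1: "ergodic_measure XX (return borel z1)"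
  using one_XX by (intro ergodic_return) (auto simp: z1_def shift_def)

lemma ret_neq: "return borel z0 \<noteq> return borel z1"
proof
  assume "return borel z0 = return borel z1"
  then have "emeasure (return borel z0) {x. x 0} = emeasure (return borel z1) {x. x 0}" by simp
  then show False using borel_coord[of 0] by (simp add: z0_def z1_def)
qed

lemma eq_return:
  fixes M :: "(nat \<Rightarrow> bool) measure"
  assumes M: "sets M = sets borel" "prob_space M" and z: "emeasure M {z} = 1"
  shows "M = return borel z"
proof (rule measure_eqI)
  show "sets M = sets (return borel z)" using M by simp
  interpret prob_space M by (rule M(2))
  have sp: "space M = UNIV" using M(1) by (metis sets_eq_imp_space_eq space_borel)
  fix B assume B: "B \<in> sets M"
  have zs: "{z} \<in> sets M" using M(1) borel_single by simp
  show "emeasure M B = emeasure (return borel z) B"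
  proof (cases "z \<in> B")
    case True
    have "emeasure M {z} \<le> emeasure M B" using True B by (intro emeasure_mono) auto
    moreover have "emeasure M B \<le> 1" by (rule subprob_emeasure_le_1)
    ultimately show ?thesis using True z B M(1) by simp
  next
    case False
    have "emeasure M (space M - {z}) = emeasure M (space M) - emeasure M {z}"
      using zs by (intro emeasure_compl) auto
    also have "\<dots> = 0" using z emeasure_space_1 by simp
    finally have c: "emeasure M (UNIV - {z}) = 0" using sp by simp
    have "space M - {z} \<in> sets M" using zs by auto
    then have "emeasure M B \<le> emeasure M (UNIV - {z})" using False sp by (intro emeasure_mono) auto
    then show ?thesis using c False B M(1) by simp
  qed
qed


definition g0 :: "(nat \<Rightarrow> bool) \<Rightarrow> real" where "g0 y = (if y 0 then 1 else 0)"

lemma avg_g0: "birkhoff_avg g0 x n = (\<Sum>j<n. indicator {y. y j} x) / real n"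
proof -
  have "(\<Sum>j<n. g0 ((shift ^^ j) x)) = (\<Sum>j<n. indicator {y. y j} x)"
    by (rule sum.cong) (auto simp: g0_def shift_pow indicator_def)
  then show ?thesis unfolding birkhoff_avg_def by simp
qed

lemma sum_ind_card:
  fixes x :: "nat \<Rightarrow> bool"
  shows "(\<Sum>j<n. indicator {y. y j} x :: real) = real (card {i. i < n \<and> x i})"
proof -
  have "(\<Sum>j<n. indicator {y. y j} x :: real) = (\<Sum>j<n. if x j then 1 else 0)"
    by (simp add: indicator_def of_bool_def)
  also have "\<dots> = (\<Sum>j\<in>{j\<in>{..<n}. x j}. 1)" by (rule sum.inter_filter[symmetric]) simp
  also have "\<dots> = real (card {j\<in>{..<n}. x j})" by simp
  also have "{j\<in>{..<n}. x j} = {i. i < n \<and> x i}" by auto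
  finally show ?thesis .
qed

lemma avg_g0_card: "birkhoff_avg g0 x n = real (card {i. i < n \<and> x i}) / real n"
  by (simp only: avg_g0 sum_ind_card)

definition AA :: "(nat \<Rightarrow> bool) set" where "AA = {x. \<exists>N. \<forall>n\<ge>N. x n}"
definition AN :: "nat \<Rightarrow> (nat \<Rightarrow> bool) set" where "AN N = {x. \<forall>n\<ge>N. x n}"

lemma borel_AN: "AN N \<in> sets borel"
proof -
  have "AN N = (\<Inter>n\<in>{N..}. {x::nat\<Rightarrow>bool. x n = True})" by (auto simp: AN_def)
  moreover have "closed (\<Inter>n\<in>{N..}. {x::nat\<Rightarrow>bool. x n = True})" by (intro closed_INT ballI closed_coord)
  ultimately show ?thesis by (metis borel_closed)
qed

lemma AA_UN: "AA = (\<Union>N. AN N)" by (auto simp: AA_def AN_def)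

lemma borel_AA: "AA \<in> sets borel"
  unfolding AA_UN by (rule sets.countable_UN) (use borel_AN in auto)

lemma shift_AA: "shift -` AA = AA"
proof
  show "shift -` AA \<subseteq> AA"
  proof
    fix x assume "x \<in> shift -` AA"
    then obtain N where "\<forall>n\<ge>N. x (Suc n)" by (auto simp: AA_def shift_def)
    then have "\<forall>n\<ge>Suc N. x n" by (metis Suc_le_D Suc_le_mono)
    then show "x \<in> AA" by (auto simp: AA_def)
  qed
  show "AA \<subseteq> shift -` AA"
  proof
    fix x assume "x \<in> AA"
    then obtain N where "\<forall>n\<ge>N. x n" by (auto simp: AA_def)
    then have "\<forall>n\<ge>N. x (Suc n)" by auto
    then show "x \<in> shift -` AA" by (auto simp: AA_def shift_def)
  qed
qed

lemma shift_AN: "shift -` AN N = AN (Suc N)"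
proof
  show "shift -` AN N \<subseteq> AN (Suc N)"
    by (auto simp: AN_def shift_def) (metis Suc_le_D Suc_le_mono)
  show "AN (Suc N) \<subseteq> shift -` AN N"
    by (auto simp: AN_def shift_def)
qed

lemma shift_coord: "shift -` {y. y j} = {y. y (Suc j)}" by (auto simp: shift_def)

lemma AN0: "AN 0 = {z1}" by (auto simp: AN_def z1_def)

lemma classify:
  fixes M :: "(nat \<Rightarrow> bool) measure"
  assumes erg: "ergodic_measure XX M"
  shows "M = return borel z0 \<or> M = return borel z1"
proof -
  have sM: "sets M = sets borel" and pM: "prob_space M" and XM: "emeasure M XX = 1"
    and inv: "\<And>A. A \<in> sets borel \<Longrightarrow> emeasure M (shift -` A) = emeasure M A"
    and er: "\<And>A. A \<in> sets borel \<Longrightarrow> shift -` A = A \<Longrightarrow> emeasure M A = 0 \<or> emeasure M A = 1"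
    using erg by (auto simp: ergodic_measure_def invariant_measure_def)
  interpret prob_space M by (rule pM)
  have sp: "space M = UNIV" using sM by (metis sets_eq_imp_space_eq space_borel)
  have ANeq: "emeasure M (AN N) = emeasure M {z1}" for N
  proof (induction N)
    case 0 then show ?case by (simp add: AN0)
  next
    case (Suc N)
    have "emeasure M (AN (Suc N)) = emeasure M (shift -` AN N)" by (simp add: shift_AN)
    also have "\<dots> = emeasure M (AN N)" using inv[OF borel_AN] .
    finally show ?case using Suc by simp
  qed
  have "(SUP N. emeasure M (AN N)) = emeasure M (\<Union>N. AN N)"
  proof (rule SUP_emeasure_incseq)
    show "range AN \<subseteq> sets M" using borel_AN sM by auto
    show "incseq AN" by (auto simp: incseq_def AN_def)
  qed
  then have AAz1: "emeasure M AA = emeasure M {z1}" using ANeq by (simp add: AA_UN)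
  show ?thesis
  proof (cases "emeasure M AA = 1")
    case True
    then have "M = return borel z1" using AAz1 by (intro eq_return sM pM) simp
    then show ?thesis by simp
  next
    case False
    then have A0: "emeasure M AA = 0" using er[OF borel_AA shift_AA] by simp
    have ae1: "AE x in M. x \<in> XX"
    proof -
      have "XX \<in> events" using borel_XX sM by simp
      moreover have "prob XX = 1" using XM by (simp add: emeasure_eq_measure)
      ultimately show ?thesis using prob_space.AE_in_set_eq_1[OF pM] by simp
    qed
    have ae2: "AE x in M. x \<notin> AA"
      by (rule AE_not_in) (use A0 borel_AA sM in \<open>auto simp: null_sets_def\<close>)
    define s where "s = (\<lambda>n x. birkhoff_avg g0 x n)"
    have meas: "s n \<in> borel_measurable M" for n
    proof -
      have "(\<lambda>x. (\<Sum>j<n. indicator {y. y j} x) / real n :: real) \<in> borel_measurable M"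
        using borel_coord sM by (intro borel_measurable_divide borel_measurable_sum borel_measurable_indicator) auto
      then show ?thesis unfolding s_def avg_g0 .
    qed
    have lim: "(\<lambda>n. integral\<^sup>L M (s n)) \<longlonglongrightarrow> integral\<^sup>L M (\<lambda>x. 0)"
    proof (rule integral_dominated_convergence[where w="\<lambda>_. 1"])
      show "(\<lambda>x. 0::real) \<in> borel_measurable M" by simp
      show "s n \<in> borel_measurable M" for n by (rule meas)
      show "integrable M (\<lambda>_. 1::real)" by simp
      show "AE x in M. (\<lambda>n. s n x) \<longlonglongrightarrow> 0" using ae1 ae2
      proof eventually_elim
        case (elim x)
        then have "\<not> (\<exists>N. \<forall>n\<ge>N. x n)" by (simp add: AA_def)
        then show ?case using dens_zero_XX[OF elim(1)] by (simp add: s_def avg_g0_card)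
      qed
      show "AE x in M. norm (s n x) \<le> 1" for n
      proof (rule AE_I2)
        fix x
        have "card {i. i < n \<and> x i} \<le> card {..<n}" by (rule card_mono) auto
        then have "real (card {i. i < n \<and> x i}) \<le> real n" by simp
        then show "norm (s n x) \<le> 1" by (cases "n = 0") (auto simp: s_def avg_g0_card divide_le_eq_1)
      qed
    qed
    define c where "c = measure M {y. y 0}"
    have mj: "measure M {y. y j} = c" for j
    proof (induction j)
      case 0 then show ?case by (simp add: c_def)
    next
      case (Suc j)
      have "emeasure M {y. y (Suc j)} = emeasure M (shift -` {y. y j})" by (simp only: shift_coord)
      also have "\<dots> = emeasure M {y. y j}" using inv[OF borel_coord[of j]] .
      finally have "emeasure M {y. y (Suc j)} = emeasure M {y. y j}" .
      then have "measure M {y. y (Suc j)} = measure M {y. y j}" by (simp add: measure_def)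
      then show ?case using Suc by simp
    qed
    have int: "integral\<^sup>L M (s (Suc n)) = c" for n
    proof -
      have "integral\<^sup>L M (s (Suc n)) = integral\<^sup>L M (\<lambda>x. (\<Sum>j<Suc n. indicator {y. y j} x :: real)) / real (Suc n)"
        unfolding s_def avg_g0 by simp
      also have "integral\<^sup>L M (\<lambda>x. (\<Sum>j<Suc n. indicator {y. y j} x :: real)) = (\<Sum>j<Suc n. integral\<^sup>L M (indicator {y. y j}))"
        by (rule Bochner_Integration.integral_sum) (use borel_coord sM in \<open>auto simp: emeasure_eq_measure\<close>)
      also have "\<dots> = (\<Sum>j<Suc n. c)" using mj sp by simp
      finally show ?thesis by simp
    qed
    have "(\<lambda>n. integral\<^sup>L M (s (Suc n))) \<longlonglongrightarrow> 0" using LIMSEQ_Suc[OF lim] by simp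
    moreover have "(\<lambda>n. integral\<^sup>L M (s (Suc n))) \<longlonglongrightarrow> c" unfolding int by simp
    ultimately have c0: "c = 0" using LIMSEQ_unique by blast
    have "emeasure M (\<Union>j. {y. y j}) = 0"
    proof (rule emeasure_UN_eq_0)
      show "emeasure M {y. y j} = 0" for j using mj[of j] c0 by (simp add: emeasure_eq_measure)
      show "range (\<lambda>j. {y::nat\<Rightarrow>bool. y j}) \<subseteq> sets M" using borel_coord sM by auto
    qed
    moreover have "(\<Union>j. {y::nat\<Rightarrow>bool. y j}) = space M - {z0}" using sp by (auto simp: z0_def fun_eq_iff)
    ultimately have "prob (space M - {z0}) = 0" by (simp add: emeasure_eq_measure)
    moreover have "prob (space M - {z0}) = 1 - prob {z0}" using borel_single sM by (intro prob_compl) auto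
    ultimately have "prob {z0} = 1" by simp
    then have "emeasure M {z0} = 1" by (simp add: emeasure_eq_measure)
    then have "M = return borel z0" by (intro eq_return sM pM)
    then show ?thesis by simp
  qed
qed


lemma compact_UNIV_fun: "compact (UNIV :: (nat \<Rightarrow> bool) set)"
proof -
  have cb: "compact_space (euclidean :: bool topology)"
    unfolding compact_space_def by (simp add: finite_imp_compact)
  have "compact_space (product_topology (\<lambda>i::nat. euclidean :: bool topology) UNIV)"
    using cb by (simp add: compact_space_product_topology)
  then have "compact_space (euclidean :: (nat \<Rightarrow> bool) topology)"
    by (simp add: euclidean_product_topology)
  then show ?thesis by (simp add: compact_space_def)
qed

lemma bounded_f:
  fixes f :: "(nat \<Rightarrow> bool) \<Rightarrow> real"
  assumes "continuous_on UNIV f"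
  shows "\<exists>B. \<forall>y. \<bar>f y\<bar> \<le> B"
proof -
  have "compact (f ` UNIV)" using compact_continuous_image[OF assms compact_UNIV_fun] .
  then have "bounded (f ` UNIV)" by (rule compact_imp_bounded)
  then obtain B where "\<forall>w\<in>f ` UNIV. norm w \<le> B" by (auto simp: bounded_iff)
  then show ?thesis by auto
qed

lemma cont_cyl:
  fixes f :: "(nat \<Rightarrow> bool) \<Rightarrow> real"
  assumes "continuous_on UNIV f" "0 < e"
  shows "\<exists>k. \<forall>y. (\<forall>i<k. y i = z i) \<longrightarrow> \<bar>f y - f z\<bar> < e"
proof -
  have "open (f -` ball (f z) e \<inter> UNIV)" using assms(1) continuous_on_open_vimage[of UNIV f] by auto
  moreover have "z \<in> f -` ball (f z) e \<inter> UNIV" using assms(2) by simp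
  ultimately obtain k where k: "\<forall>y. (\<forall>i<k. y i = z i) \<longrightarrow> y \<in> f -` ball (f z) e \<inter> UNIV"
    using open_contains_cyl by blast
  show ?thesis
  proof (intro exI allI impI)
    fix y assume "\<forall>i<k. y i = z i"
    then have "f y \<in> ball (f z) e" using k by blast
    then show "\<bar>f y - f z\<bar> < e" by (simp add: dist_real_def abs_minus_commute)
  qed
qed

lemma return_int:
  fixes f :: "(nat \<Rightarrow> bool) \<Rightarrow> real"
  assumes "continuous_on UNIV f"
  shows "integral\<^sup>L (return borel z) f = f z"
  by (rule integral_return) (auto intro: borel_measurable_continuous_onI[OF assms])

lemma generic1:
  fixes f :: "(nat \<Rightarrow> bool) \<Rightarrow> real"
  assumes N: "\<forall>n\<ge>N. x n"
  shows "birkhoff_avg f x \<longlonglongrightarrow> f z1"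
proof -
  have sj: "(shift ^^ j) x = z1" if "N \<le> j" for j
    using that N by (auto simp: shift_pow z1_def fun_eq_iff)
  define C where "C = (\<Sum>j<N. f ((shift ^^ j) x) - f z1)"
  have eq: "birkhoff_avg f x n = f z1 + C / real n" if n: "N \<le> n" "0 < n" for n
  proof -
    have "(\<Sum>j<n. f ((shift ^^ j) x) - f z1) = (\<Sum>j<N. f ((shift ^^ j) x) - f z1)"
      by (rule sum.mono_neutral_right) (use n sj in auto)
    then have "(\<Sum>j<n. f ((shift ^^ j) x)) = real n * f z1 + C"
      by (simp add: C_def sum_subtractf)
    then show ?thesis using n by (simp add: birkhoff_avg_def field_simps)
  qed
  have "(\<lambda>n. f z1 + C / real n) \<longlonglongrightarrow> f z1 + 0"
    by (intro tendsto_add tendsto_const lim_const_over_n)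
  moreover have "eventually (\<lambda>n. f z1 + C / real n = birkhoff_avg f x n) sequentially"
    using eq eventually_ge_at_top[of "max N 1"] by (auto elim!: eventually_mono)
  ultimately show ?thesis using tendsto_cong by force
qed

lemma card_bad:
  fixes x :: "nat \<Rightarrow> bool"
  shows "card {j. j < n \<and> (\<exists>i<k. x (j + i))} \<le> k * (card {i. i < n \<and> x i} + k)"
proof -
  have sub: "{j. j < n \<and> (\<exists>i<k. x (j + i))} \<subseteq> (\<Union>i\<in>{..<k}. {j. j < n \<and> x (j + i)})" by auto
  have each: "card {j. j < n \<and> x (j + i)} \<le> card {i. i < n \<and> x i} + k" if "i < k" for i
  proof -
    have "card {j. j < n \<and> x (j + i)} \<le> card {m. m < n + k \<and> x m}"
      by (rule card_inj_on_le[of "\<lambda>j. j + i"]) (use that in \<open>auto simp: inj_on_def\<close>)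
    also have "\<dots> \<le> card ({i. i < n \<and> x i} \<union> {n..<n + k})"
      by (rule card_mono) auto
    also have "\<dots> \<le> card {i. i < n \<and> x i} + card {n..<n + k}" by (rule card_Un_le)
    finally show ?thesis by simp
  qed
  have "card {j. j < n \<and> (\<exists>i<k. x (j + i))} \<le> card (\<Union>i\<in>{..<k}. {j. j < n \<and> x (j + i)})"
    by (rule card_mono[OF _ sub]) auto
  also have "\<dots> \<le> (\<Sum>i\<in>{..<k}. card {j. j < n \<and> x (j + i)})" by (rule card_UN_le) simp
  also have "\<dots> \<le> of_nat (card {..<k}) * (card {i. i < n \<and> x i} + k)"
    by (rule sum_bounded_above) (use each in auto)
  finally show ?thesis by simp
qed

lemma avg_bound:
  fixes f :: "(nat \<Rightarrow> bool) \<Rightarrow> real"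
  assumes good: "\<forall>y. (\<forall>i<k. y i = z0 i) \<longrightarrow> \<bar>f y - f z0\<bar> < e" and bd: "\<forall>y. \<bar>f y - f z0\<bar> \<le> C"
    and e: "0 < e" and n: "0 < n"
  shows "\<bar>birkhoff_avg f x n - f z0\<bar> \<le> e + C * real (k * (card {i. i < n \<and> x i} + k)) / real n"
proof -
  define Bad where "Bad = {j. j < n \<and> (\<exists>i<k. x (j + i))}"
  have C0: "0 \<le> C" using bd[rule_format, of z0] by simp
  have pt: "\<bar>f ((shift ^^ j) x) - f z0\<bar> \<le> e + (if j \<in> Bad then C else 0)" if j: "j < n" for j
  proof (cases "j \<in> Bad")
    case True then show ?thesis using bd e by (simp add: add_increasing)
  next
    case False
    then have "\<forall>i<k. (shift ^^ j) x i = z0 i" using j by (auto simp: Bad_def shift_pow z0_def add.commute)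
    then show ?thesis using good False by (simp add: less_imp_le)
  qed
  have "birkhoff_avg f x n - f z0 = (\<Sum>j<n. f ((shift ^^ j) x) - f z0) / real n"
    using n by (simp add: birkhoff_avg_def sum_subtractf field_simps)
  then have "\<bar>birkhoff_avg f x n - f z0\<bar> = \<bar>\<Sum>j<n. f ((shift ^^ j) x) - f z0\<bar> / real n" by simp
  also have "\<dots> \<le> (\<Sum>j<n. \<bar>f ((shift ^^ j) x) - f z0\<bar>) / real n"
    by (intro divide_right_mono sum_abs) simp
  also have "\<dots> \<le> (\<Sum>j<n. e + (if j \<in> Bad then C else 0)) / real n"
    by (intro divide_right_mono sum_mono pt) auto
  also have "(\<Sum>j<n. e + (if j \<in> Bad then C else 0)) = real n * e + C * real (card Bad)"
  proof -
    have "(\<Sum>j<n. (if j \<in> Bad then C else 0)) = (\<Sum>j\<in>{j\<in>{..<n}. j \<in> Bad}. C)"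
      by (rule sum.inter_filter[symmetric]) simp
    also have "{j\<in>{..<n}. j \<in> Bad} = Bad" by (auto simp: Bad_def)
    finally show ?thesis by (simp add: sum.distrib)
  qed
  also have "(real n * e + C * real (card Bad)) / real n \<le> e + C * real (k * (card {i. i < n \<and> x i} + k)) / real n"
  proof -
    have "card Bad \<le> k * (card {i. i < n \<and> x i} + k)"
      using card_bad[of n k x] by (simp add: Bad_def)
    then have "real (card Bad) \<le> real (k * (card {i. i < n \<and> x i} + k))"
      by (simp only: of_nat_le_iff)
    then have "C * real (card Bad) \<le> C * real (k * (card {i. i < n \<and> x i} + k))"
      using C0 by (rule mult_left_mono)
    then show ?thesis using n by (simp add: add_divide_distrib divide_right_mono)
  qed
  finally show ?thesis .
qed

lemma generic0:
  fixes f :: "(nat \<Rightarrow> bool) \<Rightarrow> real"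
  assumes x: "x \<in> XX" and ne: "\<not> (\<exists>N. \<forall>n\<ge>N. x n)" and f: "continuous_on UNIV f"
  shows "birkhoff_avg f x \<longlonglongrightarrow> f z0"
  unfolding tendsto_iff
proof (intro allI impI)
  fix e :: real assume e: "0 < e"
  obtain k where k: "\<forall>y. (\<forall>i<k. y i = z0 i) \<longrightarrow> \<bar>f y - f z0\<bar> < e / 2"
    using cont_cyl[OF f, of "e / 2" z0] e by auto
  obtain B where B: "\<forall>y. \<bar>f y\<bar> \<le> B" using bounded_f[OF f] by blast
  have bd: "\<forall>y. \<bar>f y - f z0\<bar> \<le> 2 * B"
  proof
    fix y show "\<bar>f y - f z0\<bar> \<le> 2 * B" using B[rule_format, of y] B[rule_format, of z0] by linarith
  qed
  have d: "(\<lambda>n. real (card {i. i < n \<and> x i}) / real n) \<longlonglongrightarrow> 0" using dens_zero_XX[OF x ne] .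
  have "(\<lambda>n. 2 * B * real k * (real (card {i. i < n \<and> x i}) / real n + real k / real n)) \<longlonglongrightarrow> 2 * B * real k * (0 + 0)"
    by (intro tendsto_mult tendsto_const tendsto_add d lim_const_over_n)
  then have "eventually (\<lambda>n. 2 * B * real k * (real (card {i. i < n \<and> x i}) / real n + real k / real n) < e / 2) sequentially"
    using e by (intro order_tendstoD(2)) auto
  moreover have "eventually (\<lambda>n. 0 < n) sequentially" by (rule eventually_gt_at_top)
  ultimately show "eventually (\<lambda>n. dist (birkhoff_avg f x n) (f z0) < e) sequentially"
  proof eventually_elim
    case (elim n)
    have "\<bar>birkhoff_avg f x n - f z0\<bar> \<le> e / 2 + 2 * B * real (k * (card {i. i < n \<and> x i} + k)) / real n"
      using avg_bound[OF k bd _ elim(2)] e by simp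
    also have "2 * B * real (k * (card {i. i < n \<and> x i} + k)) / real n
        = 2 * B * real k * (real (card {i. i < n \<and> x i}) / real n + real k / real n)"
      by (simp add: algebra_simps add_divide_distrib)
    finally show ?case using elim(1) by (simp add: dist_real_def)
  qed
qed

lemma cont_g0: "continuous_on UNIV g0"
proof -
  have "continuous_on UNIV ((\<lambda>b::bool. if b then 1 else 0::real) \<circ> (\<lambda>y::nat\<Rightarrow>bool. y 0))"
    by (rule continuous_on_compose) auto
  then show ?thesis by (simp add: g0_def o_def)
qed

theorem mainTheorem20:
  shows "\<exists>X \<mu>1 \<mu>2. shift_space X \<and> topologically_mixing X \<and>
     \<mu>1 \<noteq> \<mu>2 \<and> ergodic_measure X \<mu>1 \<and> ergodic_measure X \<mu>2 \<and>
     (\<forall>M. ergodic_measure X M \<longrightarrow> M = \<mu>1 \<or> M = \<mu>2) \<and>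
     (\<forall>x\<in>X. generic_point \<mu>1 x \<or> generic_point \<mu>2 x) \<and>
     (\<forall>t::real. 0 < t \<and> t < 1 \<longrightarrow>
        \<not> (\<exists>x\<in>X. \<forall>f :: (nat \<Rightarrow> bool) \<Rightarrow> real. continuous_on UNIV f \<longrightarrow>
              birkhoff_avg f x \<longlonglongrightarrow>
                t * integral\<^sup>L \<mu>1 f + (1 - t) * integral\<^sup>L \<mu>2 f))"
proof -
  have gen: "generic_point (return borel z0) x \<or> generic_point (return borel z1) x" if x: "x \<in> XX" for x
  proof (cases "\<exists>N. \<forall>n\<ge>N. x n")
    case True
    then obtain N where "\<forall>n\<ge>N. x n" by blast
    then have "generic_point (return borel z1) x"
      unfolding generic_point_def using generic1 return_int by auto
    then show ?thesis by simp
  next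
    case False
    then have "generic_point (return borel z0) x"
      unfolding generic_point_def using generic0[OF x False] return_int by auto
    then show ?thesis by simp
  qed
  have last: "\<not> (\<exists>x\<in>XX. \<forall>f :: (nat \<Rightarrow> bool) \<Rightarrow> real. continuous_on UNIV f \<longrightarrow>
              birkhoff_avg f x \<longlonglongrightarrow>
                t * integral\<^sup>L (return borel z0) f + (1 - t) * integral\<^sup>L (return borel z1) f)"
    if t: "0 < t \<and> t < 1" for t
  proof
    assume "\<exists>x\<in>XX. \<forall>f :: (nat \<Rightarrow> bool) \<Rightarrow> real. continuous_on UNIV f \<longrightarrow>
              birkhoff_avg f x \<longlonglongrightarrow> t * integral\<^sup>L (return borel z0) f + (1 - t) * integral\<^sup>L (return borel z1) f"
    then obtain x where x: "x \<in> XX" and h: "birkhoff_avg g0 x \<longlonglongrightarrow> t * integral\<^sup>L (return borel z0) g0 + (1 - t) * integral\<^sup>L (return borel z1) g0"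
      using cont_g0 by blast
    have i0: "integral\<^sup>L (return borel z0) g0 = 0" using return_int[OF cont_g0] by (simp add: g0_def z0_def)
    have i1: "integral\<^sup>L (return borel z1) g0 = 1" using return_int[OF cont_g0] by (simp add: g0_def z1_def)
    have h': "birkhoff_avg g0 x \<longlonglongrightarrow> 1 - t" using h i0 i1 by simp
    from gen[OF x] have "birkhoff_avg g0 x \<longlonglongrightarrow> 0 \<or> birkhoff_avg g0 x \<longlonglongrightarrow> 1"
      unfolding generic_point_def using cont_g0 i0 i1 by auto
    then have "1 - t = 0 \<or> 1 - t = 1" using h' LIMSEQ_unique by blast
    then show False using t by auto
  qed
  show ?thesis
    apply (rule exI[of _ XX], rule exI[of _ "return borel z0"], rule exI[of _ "return borel z1"])
    using shift_space_XX mixing_XX ret_neq erg0 erg1 classify gen last by blast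
qed

end
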